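(* Let $d\ge5$, $R>1$, $N$ a positive integer and $x_1,\dots,x_N\in\mathbb{R}^d$. Let $X^{(1)},\dots,X^{(N)}$ be independent Brownian motions with $X^{(i)}_0=x_i$, with joint expectation $E$, and $\overline X_N=(X^{(1)},\dots,X^{(N)})$. Then, for a constant $C=C(d)$, $$E[\mathrm{cap}(\Phi(\overline X_N,R))]\le CNR^2\quad\text{and}\quad E[\mathrm{cap}(\Phi(\overline X_N,R))^2]\le CN^2R^4.$$
   Context: Fix a constant $c_0>0$ (depending on $d$) such that for all $R>0$, a Brownian motion started at $0$ stays in the ball $B(0,R/2)$ up to time $c_0R^2$ with probability at least $0.99$. For trajectories $w_1,\dots,w_N:[0,\infty)\to\mathbb{R}^d$ with $w_i(0)=x_i$, and $R>1$, set $\Phi((w_1,\dots,w_N),R)=\bigcup_{i=1}^N B\big(w_i([0,T^{(i)}\wedge c_0R^2]),1\big)$, where $T^{(i)}$ is the exit time of $w_i$ from the ball of radius $R/2$ centered at $x_i$ and $B(A,1)=\bigcup_{a\in A}B(a,1)$ with closed Euclidean balls. $\mathrm{cap}$ is Brownian capacity (total mass of the equilibrium measure). *)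

theory Defs
  imports "HOL-Probability.Probability"
begin

definition gauss_density :: "real \<Rightarrow> 'a::euclidean_space \<Rightarrow> real" where
  "gauss_density s y = (2 * pi * s) powr (- real DIM('a) / 2) * exp (- (norm y)\<^sup>2 / (2 * s))"

text \<open>X 0, ..., X (N-1) are independent standard Brownian motions on the probability
  space M with X i 0 = x i: continuous paths, and for every finite increasing time grid
  all increments (over all i < N and all grid steps) are mutually independent and
  Gaussian with covariance (time step) times identity.\<close>
definition indep_BMs ::
  "'w measure \<Rightarrow> nat \<Rightarrow> (nat \<Rightarrow> real \<Rightarrow> 'w \<Rightarrow> 'a::euclidean_space) \<Rightarrow> (nat \<Rightarrow> 'a) \<Rightarrow> bool" where
  "indep_BMs M N X x \<longleftrightarrow>
     prob_space M \<and>
     (\<forall>i<N. \<forall>t\<ge>0. X i t \<in> borel_measurable M) \<and>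
     (\<forall>i<N. \<forall>\<omega>\<in>space M. X i 0 \<omega> = x i \<and> continuous_on {0..} (\<lambda>t. X i t \<omega>)) \<and>
     (\<forall>(n::nat) (ts::nat \<Rightarrow> real). 0 \<le> ts 0 \<and> (\<forall>k<n. ts k < ts (Suc k)) \<longrightarrow>
        prob_space.indep_vars M (\<lambda>_. borel)
          (\<lambda>(i, k) \<omega>. X i (ts (Suc k)) \<omega> - X i (ts k) \<omega>) ({..<N} \<times> {..<n}) \<and>
        (\<forall>i<N. \<forall>k<n. distributed M lborel (\<lambda>\<omega>. X i (ts (Suc k)) \<omega> - X i (ts k) \<omega>)
                          (\<lambda>y. ennreal (gauss_density (ts (Suc k) - ts k) y))))"

definition brownian_motion :: "'w measure \<Rightarrow> (real \<Rightarrow> 'w \<Rightarrow> 'a::euclidean_space) \<Rightarrow> 'a \<Rightarrow> bool" where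
  "brownian_motion M B x \<longleftrightarrow> indep_BMs M 1 (\<lambda>_. B) (\<lambda>_. x)"

text \<open>Green's function of standard Brownian motion (generator Laplacian/2) in dimension
  d = DIM('a) \<ge> 3: G(x,y) = Gamma(d/2-1) / (2 pi^(d/2)) |x-y|^(2-d), infinite on the diagonal.\<close>
definition green :: "'a::euclidean_space \<Rightarrow> 'a \<Rightarrow> ennreal" where
  "green x y = (if x = y then \<infinity> else
     ennreal (Gamma (real DIM('a) / 2 - 1) / (2 * pi powr (real DIM('a) / 2))
              * dist x y powr (2 - real DIM('a))))"

text \<open>Brownian (Newtonian) capacity: total mass of the equilibrium measure, given by the
  variational characterisation sup of mu(K) over Borel measures mu carried by K whose
  Green potential is at most 1 everywhere.\<close>
definition cap :: "'a::euclidean_space set \<Rightarrow> ennreal" where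
  "cap K = (SUP \<mu> \<in> {\<mu> :: 'a measure. sets \<mu> = sets borel \<and> emeasure \<mu> (UNIV - K) = 0 \<and>
                         (\<forall>x. (\<integral>\<^sup>+ y. green x y \<partial>\<mu>) \<le> 1)}. emeasure \<mu> K)"

text \<open>Times in [0, T \<and> c0 R^2], T the exit time of w from the open ball of radius R/2
  around w 0 (t \<le> T iff w stays in the ball on [0,t)).\<close>
definition run_times :: "real \<Rightarrow> real \<Rightarrow> (real \<Rightarrow> 'a::euclidean_space) \<Rightarrow> real set" where
  "run_times c0 R w = {t. 0 \<le> t \<and> t \<le> c0 * R\<^sup>2 \<and>
                        (\<forall>s. 0 \<le> s \<and> s < t \<longrightarrow> dist (w s) (w 0) < R / 2)}"

definition Phi :: "real \<Rightarrow> real \<Rightarrow> nat \<Rightarrow> (nat \<Rightarrow> real \<Rightarrow> 'a::euclidean_space) \<Rightarrow> 'a set" where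
  "Phi c0 R N w = (\<Union>i<N. \<Union>a \<in> w i ` run_times c0 R (w i). cball a 1)"

end

theory Submission
  imports Defs
begin
lemma pow_le_exp:
  fixes v :: real and q :: nat assumes "v \<ge> 0"
  shows "v ^ q \<le> fact q * exp v"
proof -
  have s: "(\<lambda>n. v ^ n /\<^sub>R fact n) sums exp v" by (rule exp_converges)
  have "v ^ q /\<^sub>R fact q \<le> exp v"
    using sum_le_suminf[OF sums_summable[OF s], of "{q}"] assms s sums_unique
    by (fastforce simp: divide_simps)
  then show ?thesis by (simp add: divide_simps mult.commute)
qed

lemma gauss_moment_pointwise:
  fixes y :: "'a::euclidean_space" and s :: real and q :: nat
  assumes s: "s > 0"
  shows "gauss_density s y * (norm y ^ 2) ^ q \<le>
     (4 ^ q * fact q * 2 powr (real DIM('a) / 2)) * s ^ q * gauss_density (2 * s) y"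
proof -
  define v where "v = norm y ^ 2"
  define e where "e = - real DIM('a) / 2"
  have v0: "v \<ge> 0" by (simp add: v_def)
  have "(v / (4 * s)) ^ q \<le> fact q * exp (v / (4 * s))"
    using v0 s by (intro pow_le_exp) simp
  then have v1: "v ^ q \<le> 4 ^ q * s ^ q * fact q * exp (v / (4 * s))"
    using s by (simp add: power_divide divide_simps power_mult_distrib mult_ac)
  have ex: "exp (- v / (2 * s)) * exp (v / (4 * s)) = exp (- v / (2 * (2 * s)))"
    using s by (simp add: exp_add[symmetric] field_simps)
  have pw: "(2 * pi * s) powr e = 2 powr (real DIM('a) / 2) * (2 * pi * (2 * s)) powr e"
  proof -
    have "(2 * pi * (2 * s)) powr e = 2 powr e * (2 * pi * s) powr e"
      using s by (subst powr_mult[symmetric]) (auto simp: mult_ac)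
    moreover have "2 powr (real DIM('a) / 2) * 2 powr e = 1"
      by (simp add: e_def powr_add[symmetric])
    ultimately show ?thesis by (metis mult.assoc mult_1)
  qed
  have "gauss_density s y * (norm y ^ 2) ^ q = (2 * pi * s) powr e * (exp (- v / (2 * s)) * v ^ q)"
    by (simp add: gauss_density_def v_def e_def)
  also have "\<dots> \<le> (2 * pi * s) powr e * (exp (- v / (2 * s)) * (4 ^ q * s ^ q * fact q * exp (v / (4 * s))))"
    by (intro mult_left_mono v1) auto
  also have "\<dots> = 4 ^ q * fact q * s ^ q * ((2 * pi * s) powr e * (exp (- v / (2 * s)) * exp (v / (4 * s))))"
    by (simp add: mult_ac)
  also have "\<dots> = (4 ^ q * fact q * 2 powr (real DIM('a) / 2)) * s ^ q * gauss_density (2 * s) y"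
    unfolding ex pw by (simp add: gauss_density_def v_def e_def mult_ac)
  finally show ?thesis .
qed

lemma gauss_density_measurable[measurable]:
  "gauss_density s \<in> borel_measurable (borel :: 'a::euclidean_space measure)"
  unfolding gauss_density_def by measurable

lemma indep_BMs_distr:
  assumes "indep_BMs M N X x" "i < N" "0 \<le> t1" "t1 < t2"
  shows "distributed M lborel (\<lambda>\<omega>. X i t2 \<omega> - X i t1 \<omega>) (\<lambda>y. ennreal (gauss_density (t2 - t1) y))"
proof -
  define ts :: "nat \<Rightarrow> real" where "ts = (\<lambda>k. if k = 0 then t1 else t2)"
  have "0 \<le> ts 0 \<and> (\<forall>k<1. ts k < ts (Suc k))" using assms by (simp add: ts_def)
  with assms(1) have "\<forall>i<N. \<forall>k<1. distributed M lborel (\<lambda>\<omega>. X i (ts (Suc k)) \<omega> - X i (ts k) \<omega>)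
                          (\<lambda>y. ennreal (gauss_density (ts (Suc k) - ts k) y))"
    unfolding indep_BMs_def by blast
  with assms(2) show ?thesis by (auto simp: ts_def)
qed

lemma gauss_total:
  fixes X :: "nat \<Rightarrow> real \<Rightarrow> 'w \<Rightarrow> 'a::euclidean_space"
  assumes "indep_BMs M N X x" "0 < N" "s > 0"
  shows "(\<integral>\<^sup>+y. ennreal (gauss_density s (y::'a::euclidean_space)) \<partial>lborel) = 1"
proof -
  have D: "distributed M lborel (\<lambda>\<omega>. X 0 s \<omega> - X 0 0 \<omega>) (\<lambda>y. ennreal (gauss_density s y))"
    using indep_BMs_distr[OF assms(1,2), of 0 s] assms by simp
  have P: "prob_space M" using assms(1) by (simp add: indep_BMs_def)
  have "emeasure M ((\<lambda>\<omega>. X 0 s \<omega> - X 0 0 \<omega>) -` UNIV \<inter> space M) =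
        (\<integral>\<^sup>+y. ennreal (gauss_density s (y::'a)) * indicator UNIV y \<partial>lborel)"
    using distributed_emeasure[OF D, of UNIV] by simp
  moreover have "(\<lambda>y. ennreal (gauss_density s y) * indicator UNIV y) = (\<lambda>y. ennreal (gauss_density s (y::'a)))"
    by simp
  ultimately show ?thesis using prob_space.emeasure_space_1[OF P] by simp
qed

lemma incr_moment:
  fixes X :: "nat \<Rightarrow> real \<Rightarrow> 'w \<Rightarrow> 'a::euclidean_space"
  assumes "indep_BMs M N X x" "i < N" "0 \<le> t1" "t1 < t2"
  shows "(\<integral>\<^sup>+\<omega>. ennreal ((norm (X i t2 \<omega> - X i t1 \<omega>) ^ 2) ^ q) \<partial>M)
          \<le> ennreal ((4 ^ q * fact q * 2 powr (real DIM('a) / 2)) * (t2 - t1) ^ q)"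
proof -
  define s where "s = t2 - t1"
  define A where "A = (4 ^ q * fact q * 2 powr (real DIM('a) / 2))"
  have s: "s > 0" using assms by (simp add: s_def)
  have A: "A \<ge> 0" by (simp add: A_def)
  have D: "distributed M lborel (\<lambda>\<omega>. X i t2 \<omega> - X i t1 \<omega>) (\<lambda>y. ennreal (gauss_density s y))"
    using indep_BMs_distr[OF assms] by (simp add: s_def)
  have "(\<integral>\<^sup>+\<omega>. ennreal ((norm (X i t2 \<omega> - X i t1 \<omega>) ^ 2) ^ q) \<partial>M)
      = (\<integral>\<^sup>+y. ennreal (gauss_density s (y::'a)) * ennreal ((norm y ^ 2) ^ q) \<partial>lborel)"
    using distributed_nn_integral[OF D, of "\<lambda>y. ennreal ((norm y ^ 2) ^ q)"] by simp
  also have "\<dots> \<le> (\<integral>\<^sup>+y. ennreal (A * s ^ q) * ennreal (gauss_density (2 * s) (y::'a)) \<partial>lborel)"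
  proof (intro nn_integral_mono)
    fix y :: 'a
    have g0: "gauss_density s y \<ge> 0" "gauss_density (2 * s) y \<ge> 0"
      by (auto simp: gauss_density_def)
    have "ennreal (gauss_density s y) * ennreal ((norm y ^ 2) ^ q) = ennreal (gauss_density s y * (norm y ^ 2) ^ q)"
      using g0 by (simp add: ennreal_mult)
    also have "\<dots> \<le> ennreal (A * s ^ q * gauss_density (2 * s) y)"
      using gauss_moment_pointwise[OF s, of y q] by (simp add: A_def ennreal_leI)
    also have "\<dots> = ennreal (A * s ^ q) * ennreal (gauss_density (2 * s) y)"
      using g0 A s by (simp add: ennreal_mult)
    finally show "ennreal (gauss_density s y) * ennreal ((norm y ^ 2) ^ q) \<le> \<dots>" .
  qed
  also have "\<dots> = ennreal (A * s ^ q) * (\<integral>\<^sup>+y. ennreal (gauss_density (2 * s) (y::'a)) \<partial>lborel)"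
    using nn_integral_cmult[of "\<lambda>y. ennreal (gauss_density (2 * s) (y::'a))" lborel "ennreal (A * s ^ q)"] by simp
  also have "\<dots> = ennreal (A * s ^ q)"
    using gauss_total[of M N X x "2 * s"] assms s by simp
  finally show ?thesis by (simp add: A_def s_def)
qed

definition kap :: "'a::euclidean_space itself \<Rightarrow> real" where
  "kap _ = Gamma (real DIM('a) / 2 - 1) / (2 * pi powr (real DIM('a) / 2))"

lemma kap_pos: "DIM('a::euclidean_space) \<ge> 3 \<Longrightarrow> kap TYPE('a) > 0"
  unfolding kap_def by (intro divide_pos_pos Gamma_real_pos) auto

lemma green_lower:
  fixes c y :: "'a::euclidean_space"
  assumes D: "DIM('a) \<ge> 3" and r: "r > 0" and y: "dist c y \<le> r"
  shows "ennreal (kap TYPE('a) / r ^ (DIM('a) - 2)) \<le> green c y"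
proof (cases "c = y")
  case True then show ?thesis by (simp add: green_def)
next
  case False
  define q where "q = DIM('a) - 2"
  have d0: "dist c y > 0" using False by simp
  have rq: "2 - real DIM('a) = - real q" using D by (simp add: q_def of_nat_diff)
  have "dist c y powr (2 - real DIM('a)) = inverse (dist c y powr real q)"
    unfolding rq by (rule powr_minus)
  also have "\<dots> = inverse (dist c y ^ q)" using d0 by (simp add: powr_realpow)
  finally have "dist c y powr (2 - real DIM('a)) = inverse (dist c y ^ q)" .
  moreover have "inverse (r ^ q) \<le> inverse (dist c y ^ q)"
    using d0 y by (intro le_imp_inverse_le power_mono) auto
  ultimately have "kap TYPE('a) * inverse (r ^ q) \<le> kap TYPE('a) * dist c y powr (2 - real DIM('a))"
    using kap_pos[OF D] by (intro mult_left_mono) auto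
  then have "ennreal (kap TYPE('a) / r ^ q) \<le> ennreal (kap TYPE('a) * dist c y powr (2 - real DIM('a)))"
    by (intro ennreal_leI) (simp add: divide_inverse)
  then show ?thesis using False unfolding green_def q_def kap_def by simp
qed

lemma cap_ball_bound:
  fixes \<mu> :: "'a::euclidean_space measure"
  assumes D: "DIM('a) \<ge> 3" and s: "sets \<mu> = sets borel" and pot: "\<forall>x. (\<integral>\<^sup>+ y. green x y \<partial>\<mu>) \<le> 1"
    and r: "r > 0"
  shows "emeasure \<mu> (cball c r) \<le> ennreal (r ^ (DIM('a) - 2) / kap TYPE('a))"
proof -
  define a where "a = kap TYPE('a) / r ^ (DIM('a) - 2)"
  have a: "a > 0" using kap_pos[OF D] r by (simp add: a_def)
  have cb: "cball c r \<in> sets \<mu>" unfolding s by (rule borel_closed) simp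
  have "ennreal a * emeasure \<mu> (cball c r) = (\<integral>\<^sup>+ y. ennreal a * indicator (cball c r) y \<partial>\<mu>)"
    using cb by (simp add: nn_integral_cmult_indicator)
  also have "\<dots> \<le> (\<integral>\<^sup>+ y. green c y \<partial>\<mu>)"
  proof (intro nn_integral_mono)
    fix y
    show "ennreal a * indicator (cball c r) y \<le> green c y"
    proof (cases "y \<in> cball c r")
      case True
      then have "ennreal a \<le> green c y" unfolding a_def by (intro green_lower[OF D r]) simp
      then show ?thesis using True by simp
    qed simp
  qed
  also have "\<dots> \<le> 1" using pot by simp
  finally have le: "ennreal a * emeasure \<mu> (cball c r) \<le> 1" .
  show ?thesis
  proof (cases "emeasure \<mu> (cball c r)")
    case (real m)
    then have "a * m \<le> 1" using le a by (simp add: ennreal_mult[symmetric])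
    then have "m \<le> 1 / a" using a by (simp add: field_simps)
    then show ?thesis using real a r by (simp add: a_def ennreal_leI)
  next
    case top
    then show ?thesis using le a by (simp add: ennreal_mult_top top_unique)
  qed
qed

lemma cap_cover:
  fixes K :: "'a::euclidean_space set" and J :: "'j set"
  assumes D: "DIM('a) \<ge> 3" and J: "finite J" and r: "\<And>j. j \<in> J \<Longrightarrow> r j > 0"
    and K: "K \<subseteq> (\<Union>j\<in>J. cball (c j) (r j))"
  shows "cap K \<le> ennreal (\<Sum>j\<in>J. r j ^ (DIM('a) - 2) / kap TYPE('a))"
  unfolding cap_def
proof (rule SUP_least, clarify)
  fix \<mu> :: "'a measure"
  assume s: "sets \<mu> = sets borel" and pot: "\<forall>x. (\<integral>\<^sup>+ y. green x y \<partial>\<mu>) \<le> 1"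
  have cbs: "\<And>j. cball (c j) (r j) \<in> sets \<mu>" unfolding s by (rule borel_closed) simp
  have U: "(\<Union>j\<in>J. cball (c j) (r j)) \<in> sets \<mu>" unfolding s
    by (intro sets.finite_UN J borel_closed closed_cball)
  have "emeasure \<mu> K \<le> emeasure \<mu> (\<Union>j\<in>J. cball (c j) (r j))"
    by (rule emeasure_mono[OF K U])
  also have "\<dots> \<le> (\<Sum>j\<in>J. emeasure \<mu> (cball (c j) (r j)))"
    using J cbs by (intro emeasure_subadditive_finite) auto
  also have "\<dots> \<le> (\<Sum>j\<in>J. ennreal (r j ^ (DIM('a) - 2) / kap TYPE('a)))"
    by (intro sum_mono cap_ball_bound[OF D s pot r])
  also have "\<dots> = ennreal (\<Sum>j\<in>J. r j ^ (DIM('a) - 2) / kap TYPE('a))"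
    using r kap_pos[OF D] by (intro sum_ennreal) (auto intro!: divide_nonneg_pos less_imp_le)
  finally show "emeasure \<mu> K \<le> ennreal (\<Sum>j\<in>J. r j ^ (DIM('a) - 2) / kap TYPE('a))" .
qed

lemma geom_le10: "(\<Sum>m\<le>M. (9/10::real) ^ m) \<le> 10"
proof -
  have "(\<Sum>m\<le>M. (9/10::real) ^ m) \<le> (\<Sum>m. (9/10::real) ^ m)"
    by (intro sum_le_suminf summable_geometric) auto
  also have "\<dots> = 10" by (subst suminf_geometric) auto
  finally show ?thesis .
qed

lemma dyadic_bound:
  fixes w :: "real \<Rightarrow> 'a::real_normed_vector"
  assumes inc: "\<And>m j. j < 2 ^ m \<Longrightarrow> norm (w (a + real (j + 1) / 2 ^ m) - w (a + real j / 2 ^ m)) \<le> b * (9/10) ^ m"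
    and b: "b \<ge> 0"
  shows "l \<le> 2 ^ M \<Longrightarrow> norm (w (a + real l / 2 ^ M) - w a) \<le> b * (\<Sum>m\<le>M. (9/10) ^ m)"
proof (induction M arbitrary: l)
  case 0
  then have "l = 0 \<or> l = 1" by auto
  then show ?case
  proof
    assume "l = 1" then show ?thesis using inc[of 0 0] by simp
  qed (use b in simp)
next
  case (Suc M)
  have S: "b * (\<Sum>m\<le>M. (9/10) ^ m) + b * (9/10) ^ Suc M = b * (\<Sum>m\<le>Suc M. (9/10) ^ m)"
    by (simp add: distrib_left)
  obtain l' where "l = 2 * l' \<or> l = 2 * l' + 1" by (metis oddE evenE)
  then show ?case
  proof
    assume l: "l = 2 * l'"
    then have "l' \<le> 2 ^ M" using Suc.prems by simp
    from Suc.IH[OF this] have "norm (w (a + real l' / 2 ^ M) - w a) \<le> b * (\<Sum>m\<le>M. (9/10) ^ m)" .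
    moreover have "real l / 2 ^ Suc M = real l' / 2 ^ M" using l by simp
    moreover have "0 \<le> b * (9/10) ^ Suc M" using b by simp
    ultimately show ?case using S by simp
  next
    assume l: "l = 2 * l' + 1"
    then have l': "l' < 2 ^ M" using Suc.prems by simp
    from Suc.IH[of l'] l' have IH: "norm (w (a + real l' / 2 ^ M) - w a) \<le> b * (\<Sum>m\<le>M. (9/10) ^ m)" by simp
    have i: "norm (w (a + real (2 * l' + 1) / 2 ^ Suc M) - w (a + real (2 * l') / 2 ^ Suc M)) \<le> b * (9/10) ^ Suc M"
      using inc[of "2 * l'" "Suc M"] l' by simp
    have e: "real (2 * l') / 2 ^ Suc M = real l' / 2 ^ M" by simp
    have "norm (w (a + real l / 2 ^ Suc M) - w a) \<le>
          norm (w (a + real (2 * l' + 1) / 2 ^ Suc M) - w (a + real (2 * l') / 2 ^ Suc M))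
          + norm (w (a + real l' / 2 ^ M) - w a)"
      unfolding l e[symmetric] by (rule norm_diff_triangle_le[where y="w (a + real (2 * l') / 2 ^ Suc M)"]) (simp_all only: e)
    then show ?case using i IH S by linarith
  qed
qed

lemma chaining:
  fixes w :: "real \<Rightarrow> 'a::real_normed_vector"
  assumes cont: "continuous_on {a..a+1} w" and b: "b \<ge> 0"
    and inc: "\<And>m j. j < 2 ^ m \<Longrightarrow> norm (w (a + real (j + 1) / 2 ^ m) - w (a + real j / 2 ^ m)) \<le> b * (9/10) ^ m"
    and t: "t \<in> {a..a+1}"
  shows "norm (w t - w a) \<le> 10 * b"
proof -
  define l where "l = (\<lambda>M::nat. nat \<lfloor>(t - a) * 2 ^ M\<rfloor>)"
  define s where "s = (\<lambda>M. a + real (l M) / 2 ^ M)"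
  have ta: "0 \<le> t - a" "t - a \<le> 1" using t by auto
  have lr: "real (l M) = of_int \<lfloor>(t - a) * 2 ^ M\<rfloor>" for M
    using ta by (simp add: l_def)
  have s_le: "s M \<le> t" for M
  proof -
    have "real (l M) \<le> (t - a) * 2 ^ M" unfolding lr by (rule of_int_floor_le)
    then show ?thesis by (simp add: s_def field_simps)
  qed
  have s_ge: "t - (1/2) ^ M \<le> s M" for M
  proof -
    have "(t - a) * 2 ^ M < real (l M) + 1" unfolding lr by (rule real_of_int_floor_add_one_gt)
    then have "(t - a) < (real (l M) + 1) / 2 ^ M" by (simp add: pos_less_divide_eq)
    then have "(t - a) - 1 / 2 ^ M < real (l M) / 2 ^ M" by (simp add: add_divide_distrib)
    then show ?thesis by (simp add: s_def power_one_over)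
  qed
  have l_le: "l M \<le> 2 ^ M" for M
  proof -
    have "real (l M) \<le> (t - a) * 2 ^ M" unfolding lr by (rule of_int_floor_le)
    also have "\<dots> \<le> 2 ^ M" using ta by simp
    finally have "real (l M) \<le> real (2 ^ M)" by simp
    then show ?thesis by (simp only: of_nat_le_iff)
  qed
  have s_in: "s M \<in> {a..a+1}" for M
    using s_le[of M] ta l_le[of M] by (auto simp: s_def)
  have lim: "s \<longlonglongrightarrow> t"
  proof (rule tendsto_sandwich[of "\<lambda>M. t - (1/2) ^ M" _ _ "\<lambda>M. t"])
    show "\<forall>\<^sub>F n in sequentially. t - (1 / 2) ^ n \<le> s n" using s_ge by simp
    show "\<forall>\<^sub>F n in sequentially. s n \<le> t" using s_le by simp
    have "(\<lambda>M. t - (1/2::real) ^ M) \<longlonglongrightarrow> t - 0"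
      by (intro tendsto_diff tendsto_const LIMSEQ_power_zero) simp
    then show "(\<lambda>M. t - (1/2::real) ^ M) \<longlonglongrightarrow> t" by simp
  qed simp
  have "(\<lambda>M. w (s M)) \<longlonglongrightarrow> w t"
    using continuous_on_tendsto_compose[OF cont lim t] s_in by simp
  then have "(\<lambda>M. norm (w (s M) - w a)) \<longlonglongrightarrow> norm (w t - w a)"
    by (intro tendsto_intros)
  moreover have "norm (w (s M) - w a) \<le> 10 * b" for M
  proof -
    have "norm (w (s M) - w a) \<le> b * (\<Sum>m\<le>M. (9/10) ^ m)"
      unfolding s_def by (rule dyadic_bound[OF inc b l_le])
    also have "\<dots> \<le> b * 10" by (rule mult_left_mono[OF geom_le10 b])
    finally show ?thesis by simp
  qed
  ultimately show ?thesis by (intro LIMSEQ_le_const2) auto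
qed

lemma root_pow: fixes z :: real assumes "z \<ge> 0" "n > 0" shows "(z powr (1 / real n)) ^ n = z"
proof (cases "z = 0")
  case False
  then have "(z powr (1 / real n)) ^ n = (z powr (1 / real n)) powr (real n)"
    using assms by (simp add: powr_realpow)
  also have "\<dots> = z" using assms by (simp add: powr_powr)
  finally show ?thesis .
qed (use assms in simp)

lemma le_root: fixes x z :: real assumes "x \<ge> 0" "n > 0" "x ^ n \<le> z" shows "x \<le> z powr (1 / real n)"
proof (cases "x = 0")
  case True then show ?thesis by simp
next
  case False
  then have x: "x > 0" using assms by simp
  have "x = (x ^ n) powr (1 / real n)"
    using x assms by (simp add: powr_realpow[symmetric] powr_powr)
  also have "\<dots> \<le> z powr (1 / real n)"
    using assms x by (intro powr_mono2) auto
  finally show ?thesis .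
qed

lemma sum_sq_le: fixes f :: "'j \<Rightarrow> real" assumes "finite J"
  shows "(\<Sum>j\<in>J. f j) ^ 2 \<le> real (card J) * (\<Sum>j\<in>J. (f j) ^ 2)"
proof -
  have "(\<Sum>j\<in>J. f j) ^ 2 = (\<Sum>i\<in>J. \<Sum>j\<in>J. f i * f j)"
    by (simp add: power2_eq_square sum_product)
  also have "\<dots> \<le> (\<Sum>i\<in>J. \<Sum>j\<in>J. ((f i) ^ 2 + (f j) ^ 2) / 2)"
  proof (intro sum_mono)
    fix i j
    have "0 \<le> (f i - f j) ^ 2" by simp
    then show "f i * f j \<le> ((f i) ^ 2 + (f j) ^ 2) / 2" by (simp add: power2_eq_square algebra_simps)
  qed
  also have "\<dots> = real (card J) * (\<Sum>j\<in>J. (f j) ^ 2)"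
    by (simp add: add_divide_distrib sum.distrib sum_divide_distrib[symmetric] sum.swap[of _ J J] sum_distrib_left[symmetric])
  finally show ?thesis .
qed

lemma pow_bound: fixes b :: real and q :: nat assumes "b \<ge> 0"
  shows "(1 + 10 * b) ^ q \<le> (1 + 10 * b) ^ (2 * q)"
    and "(1 + 10 * b) ^ (2 * q) \<le> 4 ^ q * (1 + 100 ^ q * b ^ (2 * q))"
proof -
  show "(1 + 10 * b) ^ q \<le> (1 + 10 * b) ^ (2 * q)"
    using assms by (intro power_increasing) auto
  have "1 + 10 * b \<le> 2 * max 1 (10 * b)" by simp
  then have "(1 + 10 * b) ^ (2 * q) \<le> (2 * max 1 (10 * b)) ^ (2 * q)"
    using assms by (intro power_mono) auto
  also have "\<dots> = 4 ^ q * (max 1 (10 * b)) ^ (2 * q)"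
    by (simp add: power_mult_distrib power_mult)
  also have "(max 1 (10 * b)) ^ (2 * q) \<le> 1 + 100 ^ q * b ^ (2 * q)"
  proof (cases "10 * b \<le> 1")
    case True then show ?thesis using assms by (simp add: max_def)
  next
    case False
    then have "(max 1 (10 * b)) ^ (2 * q) = 100 ^ q * b ^ (2 * q)"
      by (simp add: max_def power_mult_distrib power_mult)
    then show ?thesis by simp
  qed
  then have "4 ^ q * (max 1 (10 * b)) ^ (2 * q) \<le> 4 ^ q * (1 + 100 ^ q * b ^ (2 * q))"
    by (intro mult_left_mono) auto
  finally show "(1 + 10 * b) ^ (2 * q) \<le> 4 ^ q * (1 + 100 ^ q * b ^ (2 * q))" .
qed

lemma rho_bound: fixes q :: nat assumes "q \<ge> 3"
  shows "2 * (10/9) ^ (2 * q) * (1/2) ^ q \<le> (1/2::real)"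
proof -
  have e: "(10/9::real)^2 / 2 = 50/81" by (simp add: power2_eq_square)
  have e1: "2 * (10/9) ^ (2 * q) * (1/2) ^ q = 2 * (50/81::real) ^ q"
    by (simp add: power_mult power_mult_distrib[symmetric] e)
  have e2: "(50/81::real) ^ q \<le> (50/81) ^ 3"
    using assms by (intro power_decreasing) auto
  have e3: "2 * (50/81::real) ^ 3 \<le> 1/2" by (simp add: power3_eq_cube)
  show ?thesis using e1 e2 e3 by linarith
qed

lemma pick_k:
  fixes t T :: real
  assumes "0 \<le> t" "t \<le> T" "T > 0"
  shows "\<exists>k. k < nat \<lceil>T\<rceil> \<and> real k \<le> t \<and> t \<le> real k + 1"
proof (cases "t = 0")
  case True
  then show ?thesis using assms by (intro exI[of _ 0]) auto
next
  case False
  then have t: "t > 0" using assms by simp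
  have c1: "\<lceil>t\<rceil> \<ge> 1" using t by (simp add: one_le_ceiling)
  have c2: "\<lceil>t\<rceil> \<le> \<lceil>T\<rceil>" using assms by (simp add: ceiling_mono)
  define k where "k = nat (\<lceil>t\<rceil> - 1)"
  have rk: "real k = of_int \<lceil>t\<rceil> - 1" using c1 by (simp add: k_def of_nat_diff)
  have "k < nat \<lceil>T\<rceil>" using c1 c2 assms(3) by (simp add: k_def)
  moreover have "real k \<le> t" unfolding rk using ceiling_correct[of t] by linarith
  moreover have "t \<le> real k + 1" unfolding rk by simp
  ultimately show ?thesis by blast
qed

lemma pointwise:
  fixes w :: "nat \<Rightarrow> real \<Rightarrow> 'a::euclidean_space"
  assumes D: "DIM('a) \<ge> 5" and c0: "c0 > 0" and R: "R > 1"
    and cont: "\<And>i. i < N \<Longrightarrow> continuous_on {0..} (w i)"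
  defines "q \<equiv> DIM('a) - 2"
  defines "n \<equiv> nat \<lceil>c0 * R\<^sup>2\<rceil>"
  defines "Z \<equiv> \<lambda>i k. (\<Sum>m. \<Sum>j<2^m. ennreal ((10/9) ^ (2 * q * m) *
              (norm (w i (real k + real (j + 1) / 2 ^ m) - w i (real k + real j / 2 ^ m)) ^ 2) ^ q))"
  defines "G \<equiv> \<lambda>i k. ennreal (4 ^ q) * (1 + ennreal (100 ^ q) * Z i k)"
  shows "cap (Phi c0 R N w) \<le> ennreal (1 / kap TYPE('a)) * (\<Sum>p\<in>{..<N}\<times>{..<n}. G (fst p) (snd p))
       \<and> (cap (Phi c0 R N w))\<^sup>2 \<le> ennreal (real N * real n / (kap TYPE('a))\<^sup>2) * (\<Sum>p\<in>{..<N}\<times>{..<n}. G (fst p) (snd p))"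
proof -
  define J where "J = {..<N} \<times> {..<n}"
  define \<kappa> where "\<kappa> = kap TYPE('a)"
  have D3: "DIM('a) \<ge> 3" using D by simp
  have q3: "q \<ge> 3" using D by (simp add: q_def)
  have kp: "\<kappa> > 0" unfolding \<kappa>_def by (rule kap_pos[OF D3])
  have fJ: "finite J" by (simp add: J_def)
  have cJ: "card J = N * n" by (simp add: J_def card_cartesian_product)
  show ?thesis
  proof (cases "\<exists>p\<in>J. Z (fst p) (snd p) = \<top>")
    case True
    then obtain p where p: "p \<in> J" "Z (fst p) (snd p) = \<top>" by blast
    have "G (fst p) (snd p) = \<top>" using p by (simp add: G_def ennreal_mult_eq_top_iff)
    then have St: "(\<Sum>p\<in>J. G (fst p) (snd p)) = \<top>" using p fJ by (auto simp: ennreal_sum_eq_top)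
    have Np: "N > 0" "n > 0" using p by (auto simp: J_def)
    have a1: "ennreal (1 / \<kappa>) * \<top> = \<top>" using kp by (simp add: ennreal_mult_eq_top_iff)
    have a2: "ennreal (real N * real n / \<kappa>\<^sup>2) * \<top> = \<top>" using kp Np by (simp add: ennreal_mult_eq_top_iff)
    show ?thesis using St a1 a2 by (simp add: J_def[symmetric] \<kappa>_def[symmetric])
  next
    case False
    then have fin: "\<And>p. p \<in> J \<Longrightarrow> Z (fst p) (snd p) < \<top>" by (auto simp: top.not_eq_extremum)
    define z where "z = (\<lambda>p. enn2real (Z (fst p) (snd p)))"
    define b where "b = (\<lambda>p. z p powr (1 / real (2 * q)))"
    define r where "r = (\<lambda>p. 1 + 10 * b p)"
    define F where "F = (\<lambda>p. 4 ^ q * (1 + 100 ^ q * z p))"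
    have z0: "z p \<ge> 0" for p by (simp add: z_def)
    have b0: "b p \<ge> 0" for p by (simp add: b_def)
    have Zz: "Z (fst p) (snd p) = ennreal (z p)" if "p \<in> J" for p
      using fin[OF that] by (simp add: z_def ennreal_enn2real_if)
    have GF: "G (fst p) (snd p) = ennreal (F p)" if "p \<in> J" for p
    proof -
      have "ennreal (1 + 100 ^ q * z p) = 1 + ennreal (100 ^ q) * ennreal (z p)"
        using z0[of p] by (simp add: ennreal_plus ennreal_mult)
      then show ?thesis using Zz[OF that] z0[of p] by (simp add: G_def F_def ennreal_mult)
    qed
    have bz: "b p ^ (2 * q) = z p" for p
      unfolding b_def using z0[of p] q3 by (intro root_pow) auto
    have rF: "r p ^ q \<le> F p" "r p ^ (2 * q) \<le> F p" for p
      using pow_bound[OF b0[of p], of q] bz[of p] by (auto simp: r_def F_def)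
    have inc: "norm (w (fst p) (real (snd p) + real (j + 1) / 2 ^ m) - w (fst p) (real (snd p) + real j / 2 ^ m))
                \<le> b p * (9/10) ^ m" if p: "p \<in> J" and j: "j < 2 ^ m" for p m j
    proof -
      define d where "d = norm (w (fst p) (real (snd p) + real (j + 1) / 2 ^ m) - w (fst p) (real (snd p) + real j / 2 ^ m))"
      define tm where "tm = (\<lambda>m j. ennreal ((10/9) ^ (2 * q * m) *
              (norm (w (fst p) (real (snd p) + real (j + 1) / 2 ^ m) - w (fst p) (real (snd p) + real j / 2 ^ m)) ^ 2) ^ q))"
      have "tm m j \<le> (\<Sum>j<2^m. tm m j)"
        using j by (intro member_le_sum) auto
      also have "\<dots> \<le> (\<Sum>m. \<Sum>j<2^m. tm m j)"
        using sum_le_suminf[OF summableI, of "{m}" "\<lambda>m. \<Sum>j<2^m. tm m j"] by simp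
      also have "\<dots> = ennreal (z p)"
        using Zz[OF p] by (simp add: Z_def tm_def case_prod_beta)
      finally have "(10/9) ^ (2 * q * m) * (d ^ 2) ^ q \<le> z p"
        using z0[of p] by (simp add: tm_def d_def ennreal_le_iff)
      moreover have "(10/9) ^ (2 * q * m) * (d ^ 2) ^ q = ((10/9) ^ m * d) ^ (2 * q)"
        by (simp add: power_mult_distrib power_mult[symmetric] mult_ac)
      ultimately have "((10/9) ^ m * d) ^ (2 * q) \<le> z p" by simp
      then have "(10/9) ^ m * d \<le> b p"
        unfolding b_def using q3 by (intro le_root) (auto simp: d_def)
      then have h1: "(9/10) ^ m * ((10/9) ^ m * d) \<le> (9/10) ^ m * b p"
        by (intro mult_left_mono) auto
      have h2: "(9/10::real) ^ m * ((10/9) ^ m * d) = d"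
        by (simp only: mult.assoc[symmetric] power_mult_distrib[symmetric]) simp
      have "d \<le> b p * (9/10) ^ m" using h1 unfolding h2 by (simp add: mult.commute)
      then show ?thesis by (simp only: d_def)
    qed
    have cover: "Phi c0 R N w \<subseteq> (\<Union>p\<in>J. cball (w (fst p) (real (snd p))) (r p))"
    proof
      fix y assume "y \<in> Phi c0 R N w"
      then obtain i t where i: "i < N" and t: "t \<in> run_times c0 R (w i)" and y: "y \<in> cball (w i t) 1"
        by (auto simp: Phi_def)
      have t0: "0 \<le> t" "t \<le> c0 * R\<^sup>2" using t by (auto simp: run_times_def)
      have T0: "c0 * R\<^sup>2 > 0" using c0 R by simp
      obtain k where k: "k < n" "real k \<le> t" "t \<le> real k + 1"
        using pick_k[OF t0 T0] by (auto simp: n_def)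
      define p where "p = (i, k)"
      have pJ: "p \<in> J" using i k by (simp add: p_def J_def)
      have cont': "continuous_on {real k..real k + 1} (w i)"
        by (rule continuous_on_subset[OF cont[OF i]]) auto
      have "norm (w i t - w i (real k)) \<le> 10 * b p"
        using chaining[OF cont' b0[of p], of t] inc[OF pJ] k by (simp add: p_def)
      then have h: "dist (w i (real k)) (w i t) \<le> 10 * b p" by (simp add: dist_norm norm_minus_commute)
      have "dist (w i (real k)) y \<le> dist (w i (real k)) (w i t) + dist (w i t) y" by (rule dist_triangle)
      also have "\<dots> \<le> 10 * b p + 1" using h y by (intro add_mono) auto
      finally have "dist (w i (real k)) y \<le> r p" by (simp add: r_def)
      then show "y \<in> (\<Union>p\<in>J. cball (w (fst p) (real (snd p))) (r p))"
        using pJ by (intro UN_I[of p]) (auto simp: p_def)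
    qed
    have rpos: "r p > 0" for p using b0[of p] by (simp add: r_def)
    have capS: "cap (Phi c0 R N w) \<le> ennreal (\<Sum>p\<in>J. r p ^ q / \<kappa>)"
      using cap_cover[OF D3 fJ rpos cover] by (simp add: q_def \<kappa>_def)
    have S0: "0 \<le> (\<Sum>p\<in>J. r p ^ q / \<kappa>)" using rpos kp by (intro sum_nonneg divide_nonneg_pos zero_le_power less_imp_le) auto
    have F0: "F p \<ge> 0" for p using z0[of p] by (simp add: F_def)
    have sumG: "(\<Sum>p\<in>J. G (fst p) (snd p)) = ennreal (\<Sum>p\<in>J. F p)"
      using GF F0 by (simp add: sum_ennreal)
    have part1: "cap (Phi c0 R N w) \<le> ennreal (1 / \<kappa>) * (\<Sum>p\<in>J. G (fst p) (snd p))"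
    proof -
      have "(\<Sum>p\<in>J. r p ^ q / \<kappa>) \<le> (\<Sum>p\<in>J. F p / \<kappa>)"
        using rF kp by (intro sum_mono divide_right_mono) auto
      also have "\<dots> = 1 / \<kappa> * (\<Sum>p\<in>J. F p)" by (simp add: sum_divide_distrib)
      finally have le1: "(\<Sum>p\<in>J. r p ^ q / \<kappa>) \<le> 1 / \<kappa> * (\<Sum>p\<in>J. F p)" .
      have "ennreal (1 / \<kappa>) * ennreal (\<Sum>p\<in>J. F p) = ennreal (1 / \<kappa> * (\<Sum>p\<in>J. F p))"
        using kp F0 by (intro ennreal_mult[symmetric]) (auto intro: sum_nonneg)
      then have "ennreal (\<Sum>p\<in>J. r p ^ q / \<kappa>) \<le> ennreal (1 / \<kappa>) * ennreal (\<Sum>p\<in>J. F p)"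
        using le1 by (simp add: ennreal_leI)
      then show ?thesis using capS sumG by simp
    qed
    have part2: "(cap (Phi c0 R N w))\<^sup>2 \<le> ennreal (real N * real n / \<kappa>\<^sup>2) * (\<Sum>p\<in>J. G (fst p) (snd p))"
    proof -
      have "(cap (Phi c0 R N w))\<^sup>2 \<le> (ennreal (\<Sum>p\<in>J. r p ^ q / \<kappa>))\<^sup>2"
        by (intro power_mono capS) simp
      also have "\<dots> = ennreal ((\<Sum>p\<in>J. r p ^ q / \<kappa>)\<^sup>2)" using S0 by (simp add: ennreal_power)
      also have "(\<Sum>p\<in>J. r p ^ q / \<kappa>)\<^sup>2 \<le> real (card J) * (\<Sum>p\<in>J. (r p ^ q / \<kappa>)\<^sup>2)"
        by (rule sum_sq_le[OF fJ])
      also have "(\<Sum>p\<in>J. (r p ^ q / \<kappa>)\<^sup>2) \<le> (\<Sum>p\<in>J. F p / \<kappa>\<^sup>2)"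
      proof (intro sum_mono)
        fix p
        have "(r p ^ q / \<kappa>)\<^sup>2 = r p ^ (2 * q) / \<kappa>\<^sup>2"
          by (simp add: power_divide power_mult[symmetric] mult.commute)
        also have "\<dots> \<le> F p / \<kappa>\<^sup>2" using rF(2)[of p] kp by (intro divide_right_mono) auto
        finally show "(r p ^ q / \<kappa>)\<^sup>2 \<le> F p / \<kappa>\<^sup>2" .
      qed
      also have "real (card J) * (\<Sum>p\<in>J. F p / \<kappa>\<^sup>2) = real N * real n / \<kappa>\<^sup>2 * (\<Sum>p\<in>J. F p)"
        by (simp add: cJ sum_divide_distrib[symmetric])
      finally have "(cap (Phi c0 R N w))\<^sup>2 \<le> ennreal (real N * real n / \<kappa>\<^sup>2 * (\<Sum>p\<in>J. F p))"
        by (simp add: ennreal_leI mult_left_mono)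
      also have "\<dots> = ennreal (real N * real n / \<kappa>\<^sup>2) * ennreal (\<Sum>p\<in>J. F p)"
        using kp F0 by (intro ennreal_mult) (auto intro: sum_nonneg)
      finally show ?thesis using sumG by simp
    qed
    show ?thesis using part1 part2 by (simp add: J_def \<kappa>_def)
  qed
qed

lemma expect_G:
  fixes X :: "nat \<Rightarrow> real \<Rightarrow> 'w \<Rightarrow> 'a::euclidean_space"
  assumes D: "DIM('a) \<ge> 5" and BM: "indep_BMs M N X x" and i: "i < N"
  defines "q \<equiv> DIM('a) - 2"
  defines "A0 \<equiv> 4 ^ q * fact q * 2 powr (real DIM('a) / 2)"
  shows "(\<integral>\<^sup>+\<omega>. ennreal (4 ^ q) * (1 + ennreal (100 ^ q) * (\<Sum>m. \<Sum>j<2^m. ennreal ((10/9) ^ (2 * q * m) *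
              (norm (X i (real k + real (j + 1) / 2 ^ m) \<omega> - X i (real k + real j / 2 ^ m) \<omega>) ^ 2) ^ q))) \<partial>M)
         \<le> ennreal (4 ^ q * (1 + 100 ^ q * (2 * A0)))"
    and "(\<lambda>\<omega>. ennreal (4 ^ q) * (1 + ennreal (100 ^ q) * (\<Sum>m. \<Sum>j<2^m. ennreal ((10/9) ^ (2 * q * m) *
              (norm (X i (real k + real (j + 1) / 2 ^ m) \<omega> - X i (real k + real j / 2 ^ m) \<omega>) ^ 2) ^ q)))) \<in> borel_measurable M"
proof -
  have q3: "q \<ge> 3" using D by (simp add: q_def)
  have P: "prob_space M" using BM by (simp add: indep_BMs_def)
  have Xm: "X i t \<in> borel_measurable M" if "t \<ge> 0" for t
    using BM i that by (simp add: indep_BMs_def)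
  have Xm1[measurable]: "X i (real k + real j / 2 ^ m) \<in> borel_measurable M" for j m
    by (rule Xm) simp
  have Xm2[measurable]: "X i (real k + real (j + 1) / 2 ^ m) \<in> borel_measurable M" for j m
    by (rule Xm) simp
  define f where "f = (\<lambda>m j \<omega>. ennreal ((10/9) ^ (2 * q * m) *
              (norm (X i (real k + real (j + 1) / 2 ^ m) \<omega> - X i (real k + real j / 2 ^ m) \<omega>) ^ 2) ^ q))"
  have fm[measurable]: "f m j \<in> borel_measurable M" for m j
    unfolding f_def by measurable
  define \<rho> where "\<rho> = 2 * (10/9) ^ (2 * q) * (1/2::real) ^ q"
  have \<rho>: "\<rho> \<le> 1/2" "\<rho> \<ge> 0" using rho_bound[OF q3] by (auto simp: \<rho>_def)
  have A0: "A0 \<ge> 0" by (simp add: A0_def)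
  have Ef: "(\<integral>\<^sup>+\<omega>. f m j \<omega> \<partial>M) \<le> ennreal ((10/9) ^ (2 * q * m) * (A0 * (1 / 2 ^ m) ^ q))" for m j
  proof -
    have "(\<integral>\<^sup>+\<omega>. f m j \<omega> \<partial>M) = ennreal ((10/9) ^ (2 * q * m)) *
       (\<integral>\<^sup>+\<omega>. ennreal ((norm (X i (real k + real (j + 1) / 2 ^ m) \<omega> - X i (real k + real j / 2 ^ m) \<omega>) ^ 2) ^ q) \<partial>M)"
    proof -
      have gm: "(\<lambda>\<omega>. ennreal ((norm (X i (real k + real (j + 1) / 2 ^ m) \<omega> - X i (real k + real j / 2 ^ m) \<omega>) ^ 2) ^ q)) \<in> borel_measurable M"
        by measurable
      show ?thesis
        unfolding f_def using gm by (subst nn_integral_cmult[symmetric]) (auto simp: ennreal_mult)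
    qed
    also have "\<dots> \<le> ennreal ((10/9) ^ (2 * q * m)) * ennreal (A0 * ((real k + real (j + 1) / 2 ^ m) - (real k + real j / 2 ^ m)) ^ q)"
      unfolding A0_def by (intro mult_left_mono incr_moment[OF BM i]) (auto simp: divide_strict_right_mono)
    also have "((real k + real (j + 1) / 2 ^ m) - (real k + real j / 2 ^ m)) = 1 / 2 ^ m"
      by (simp add: diff_divide_distrib[symmetric])
    finally show ?thesis using A0 by (simp add: ennreal_mult)
  qed
  have Esum: "(\<integral>\<^sup>+\<omega>. (\<Sum>j<2^m. f m j \<omega>) \<partial>M) \<le> ennreal (A0 * \<rho> ^ m)" for m
  proof -
    have "(\<integral>\<^sup>+\<omega>. (\<Sum>j<2^m. f m j \<omega>) \<partial>M) = (\<Sum>j<2^m. (\<integral>\<^sup>+\<omega>. f m j \<omega> \<partial>M))"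
      by (rule nn_integral_sum) simp
    also have "\<dots> \<le> (\<Sum>j<(2::nat)^m. ennreal ((10/9) ^ (2 * q * m) * (A0 * (1 / 2 ^ m) ^ q)))"
      by (intro sum_mono Ef)
    also have "\<dots> = ennreal (2 ^ m * ((10/9) ^ (2 * q * m) * (A0 * (1 / 2 ^ m) ^ q)))"
      using A0 by (simp add: ennreal_mult ennreal_of_nat_eq_real_of_nat)
    also have "2 ^ m * ((10/9) ^ (2 * q * m) * (A0 * (1 / 2 ^ m) ^ q)) = A0 * \<rho> ^ m"
    proof -
      have e1: "\<rho> ^ m = 2 ^ m * ((10/9) ^ (2 * q)) ^ m * ((1/2) ^ q) ^ m"
        by (simp only: \<rho>_def power_mult_distrib)
      have e2: "((10/9::real) ^ (2 * q)) ^ m = (10/9) ^ (2 * q * m)" by (simp only: power_mult)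
      have e3: "((1/2::real) ^ q) ^ m = (1 / 2 ^ m) ^ q"
        by (simp only: power_mult[symmetric] power_one_over mult.commute)
      show ?thesis unfolding e1 e2 e3 by (simp add: mult_ac)
    qed
    finally show ?thesis .
  qed
  have EZ: "(\<integral>\<^sup>+\<omega>. (\<Sum>m. \<Sum>j<2^m. f m j \<omega>) \<partial>M) \<le> ennreal (2 * A0)"
  proof -
    have "(\<integral>\<^sup>+\<omega>. (\<Sum>m. \<Sum>j<2^m. f m j \<omega>) \<partial>M) = (\<Sum>m. (\<integral>\<^sup>+\<omega>. (\<Sum>j<2^m. f m j \<omega>) \<partial>M))"
      by (rule nn_integral_suminf) simp
    also have "\<dots> \<le> (\<Sum>m. ennreal (A0 * \<rho> ^ m))"
      by (intro suminf_le Esum) auto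
    also have "(\<Sum>m. ennreal (A0 * \<rho> ^ m)) = ennreal (A0 * (1 / (1 - \<rho>)))"
    proof -
      have "(\<lambda>m. A0 * \<rho> ^ m) sums (A0 * (1 / (1 - \<rho>)))"
        using \<rho> by (intro sums_mult geometric_sums) auto
      then have "(\<lambda>m. ennreal (A0 * \<rho> ^ m)) sums ennreal (A0 * (1 / (1 - \<rho>)))"
        using \<rho> A0 by (subst sums_ennreal) auto
      then show ?thesis by (rule sums_unique[symmetric])
    qed
    also have "A0 * (1 / (1 - \<rho>)) \<le> 2 * A0"
    proof -
      have "1 / (1 - \<rho>) \<le> 2" using \<rho> by (simp add: divide_simps)
      then show ?thesis using A0 by (metis mult.commute mult_left_mono)
    qed
    finally show ?thesis by (simp add: ennreal_leI)
  qed
  have Zm[measurable]: "(\<lambda>\<omega>. \<Sum>m. \<Sum>j<2^m. f m j \<omega>) \<in> borel_measurable M" by measurable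
  have "(\<integral>\<^sup>+\<omega>. ennreal (4 ^ q) * (1 + ennreal (100 ^ q) * (\<Sum>m. \<Sum>j<2^m. f m j \<omega>)) \<partial>M)
      = ennreal (4 ^ q) * (1 + ennreal (100 ^ q) * (\<integral>\<^sup>+\<omega>. (\<Sum>m. \<Sum>j<2^m. f m j \<omega>) \<partial>M))"
    using prob_space.emeasure_space_1[OF P]
    by (simp add: nn_integral_cmult nn_integral_add)
  also have "\<dots> \<le> ennreal (4 ^ q) * (1 + ennreal (100 ^ q) * ennreal (2 * A0))"
    by (intro mult_left_mono add_left_mono EZ) auto
  also have "\<dots> = ennreal (4 ^ q * (1 + 100 ^ q * (2 * A0)))"
    using A0 by (simp add: ennreal_mult ennreal_plus)
  finally show "(\<integral>\<^sup>+\<omega>. ennreal (4 ^ q) * (1 + ennreal (100 ^ q) * (\<Sum>m. \<Sum>j<2^m. ennreal ((10/9) ^ (2 * q * m) *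
              (norm (X i (real k + real (j + 1) / 2 ^ m) \<omega> - X i (real k + real j / 2 ^ m) \<omega>) ^ 2) ^ q))) \<partial>M)
         \<le> ennreal (4 ^ q * (1 + 100 ^ q * (2 * A0)))" by (simp add: f_def)
  show "(\<lambda>\<omega>. ennreal (4 ^ q) * (1 + ennreal (100 ^ q) * (\<Sum>m. \<Sum>j<2^m. ennreal ((10/9) ^ (2 * q * m) *
              (norm (X i (real k + real (j + 1) / 2 ^ m) \<omega> - X i (real k + real j / 2 ^ m) \<omega>) ^ 2) ^ q)))) \<in> borel_measurable M"
    using Zm unfolding f_def by measurable
qed

theorem lemma3p6:
  assumes dim: "DIM('a::euclidean_space) \<ge> 5"
    and c0_pos: "c0 > 0"
    and c0_prop: "\<forall>R>0. \<forall>(M' :: 'w measure) B. brownian_motion M' B (0::'a) \<longrightarrow>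
        measure M' {\<omega> \<in> space M'. \<forall>t\<in>{0..c0 * R\<^sup>2}. B t \<omega> \<in> ball 0 (R / 2)} \<ge> 0.99"
  shows "\<exists>C>0. \<forall>R>1. \<forall>N>0. \<forall>(x :: nat \<Rightarrow> 'a) (M :: 'w measure) X.
           indep_BMs M N X x \<longrightarrow>
             (\<integral>\<^sup>+ \<omega>. cap (Phi c0 R N (\<lambda>i t. X i t \<omega>)) \<partial>M) \<le> ennreal (C * real N * R\<^sup>2) \<and>
             (\<integral>\<^sup>+ \<omega>. (cap (Phi c0 R N (\<lambda>i t. X i t \<omega>)))\<^sup>2 \<partial>M) \<le> ennreal (C * (real N)\<^sup>2 * R ^ 4)"
proof -
  define q where "q = DIM('a) - 2"
  define A0 where "A0 = 4 ^ q * fact q * 2 powr (real DIM('a) / 2)"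
  define B where "B = 4 ^ q * (1 + 100 ^ q * (2 * A0))"
  define \<kappa> where "\<kappa> = kap TYPE('a)"
  define C where "C = B * (c0 + 1) / \<kappa> + B * (c0 + 1)\<^sup>2 / \<kappa>\<^sup>2"
  have D3: "DIM('a) \<ge> 3" using dim by simp
  have kp: "\<kappa> > 0" unfolding \<kappa>_def by (rule kap_pos[OF D3])
  have A0: "A0 \<ge> 0" by (simp add: A0_def)
  have Bp: "B > 0" using A0 by (simp add: B_def add_pos_nonneg)
  have C1: "B * (c0 + 1) / \<kappa> \<le> C" and C2: "B * (c0 + 1)\<^sup>2 / \<kappa>\<^sup>2 \<le> C"
    using Bp kp c0_pos by (simp_all add: C_def)
  have Cp: "C > 0" using Bp kp c0_pos unfolding C_def by (intro add_pos_pos divide_pos_pos mult_pos_pos) auto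
  show ?thesis
  proof (intro exI[of _ C] conjI allI impI Cp)
    fix R :: real and N :: nat and x :: "nat \<Rightarrow> 'a" and M :: "'w measure" and X
    assume R: "R > 1" and N: "N > 0" and BM: "indep_BMs M N X x"
    define n where "n = nat \<lceil>c0 * R\<^sup>2\<rceil>"
    define J where "J = {..<N} \<times> {..<n}"
    define G where "G = (\<lambda>p \<omega>. ennreal (4 ^ q) * (1 + ennreal (100 ^ q) * (\<Sum>m. \<Sum>j<2^m. ennreal ((10/9) ^ (2 * q * m) *
              (norm (X (fst p) (real (snd p) + real (j + 1) / 2 ^ m) \<omega> - X (fst p) (real (snd p) + real j / 2 ^ m) \<omega>) ^ 2) ^ q))))"
    have cont: "\<And>i. i < N \<Longrightarrow> continuous_on {0..} (\<lambda>t. X i t \<omega>)" if "\<omega> \<in> space M" for \<omega>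
      using BM that by (simp add: indep_BMs_def)
    have pw: "cap (Phi c0 R N (\<lambda>i t. X i t \<omega>)) \<le> ennreal (1 / \<kappa>) * (\<Sum>p\<in>J. G p \<omega>)
       \<and> (cap (Phi c0 R N (\<lambda>i t. X i t \<omega>)))\<^sup>2 \<le> ennreal (real N * real n / \<kappa>\<^sup>2) * (\<Sum>p\<in>J. G p \<omega>)"
      if "\<omega> \<in> space M" for \<omega>
      using pointwise[OF dim c0_pos R cont[OF that], of N] by (simp add: G_def J_def n_def q_def \<kappa>_def)
    have Gm: "G p \<in> borel_measurable M" if "p \<in> J" for p
    proof -
      have "fst p < N" using that by (auto simp: J_def)
      from expect_G(2)[OF dim BM this, of "snd p"] show ?thesis by (simp add: G_def q_def)
    qed
    have EG: "(\<integral>\<^sup>+\<omega>. G p \<omega> \<partial>M) \<le> ennreal B" if "p \<in> J" for p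
    proof -
      have "fst p < N" using that by (auto simp: J_def)
      from expect_G(1)[OF dim BM this, of "snd p"] show ?thesis by (simp add: G_def q_def B_def A0_def)
    qed
    have ES: "(\<integral>\<^sup>+\<omega>. (\<Sum>p\<in>J. G p \<omega>) \<partial>M) \<le> ennreal (real N * real n * B)"
    proof -
      have "(\<integral>\<^sup>+\<omega>. (\<Sum>p\<in>J. G p \<omega>) \<partial>M) = (\<Sum>p\<in>J. (\<integral>\<^sup>+\<omega>. G p \<omega> \<partial>M))"
        using Gm by (rule nn_integral_sum)
      also have "\<dots> \<le> (\<Sum>p\<in>J. ennreal B)" using EG by (rule sum_mono)
      also have "\<dots> = ennreal (real N * real n * B)"
        using Bp by (simp add: J_def card_cartesian_product ennreal_of_nat_eq_real_of_nat ennreal_mult mult_ac)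
      finally show ?thesis .
    qed
    have nle: "real n \<le> (c0 + 1) * R\<^sup>2"
    proof -
      have "real n \<le> c0 * R\<^sup>2 + 1" unfolding n_def using c0_pos R
        by (simp add: of_nat_nat ceiling_correct)
      also have "\<dots> \<le> (c0 + 1) * R\<^sup>2" using R by (simp add: distrib_right)
      finally show ?thesis .
    qed
    have n0: "real n \<ge> 0" by simp
    show "(\<integral>\<^sup>+ \<omega>. cap (Phi c0 R N (\<lambda>i t. X i t \<omega>)) \<partial>M) \<le> ennreal (C * real N * R\<^sup>2)"
    proof -
      have "(\<integral>\<^sup>+ \<omega>. cap (Phi c0 R N (\<lambda>i t. X i t \<omega>)) \<partial>M) \<le> (\<integral>\<^sup>+ \<omega>. ennreal (1 / \<kappa>) * (\<Sum>p\<in>J. G p \<omega>) \<partial>M)"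
        using pw by (intro nn_integral_mono) blast
      also have "\<dots> = ennreal (1 / \<kappa>) * (\<integral>\<^sup>+\<omega>. (\<Sum>p\<in>J. G p \<omega>) \<partial>M)"
        using Gm by (intro nn_integral_cmult) (simp add: J_def)
      also have "\<dots> \<le> ennreal (1 / \<kappa>) * ennreal (real N * real n * B)"
        by (intro mult_left_mono ES) simp
      also have "\<dots> = ennreal (real N * real n * B / \<kappa>)"
        using kp Bp by (simp add: ennreal_mult[symmetric])
      also have "real N * real n * B / \<kappa> \<le> C * real N * R\<^sup>2"
      proof -
        have "real N * real n * B / \<kappa> \<le> real N * ((c0 + 1) * R\<^sup>2) * B / \<kappa>"
          using nle kp Bp by (intro divide_right_mono mult_right_mono mult_left_mono) auto
        also have "\<dots> = (B * (c0 + 1) / \<kappa>) * real N * R\<^sup>2" by (simp add: field_simps)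
        also have "\<dots> \<le> C * real N * R\<^sup>2" using C1 by (intro mult_right_mono) auto
        finally show ?thesis .
      qed
      finally show ?thesis by (simp add: ennreal_leI)
    qed
    show "(\<integral>\<^sup>+ \<omega>. (cap (Phi c0 R N (\<lambda>i t. X i t \<omega>)))\<^sup>2 \<partial>M) \<le> ennreal (C * (real N)\<^sup>2 * R ^ 4)"
    proof -
      have "(\<integral>\<^sup>+ \<omega>. (cap (Phi c0 R N (\<lambda>i t. X i t \<omega>)))\<^sup>2 \<partial>M) \<le> (\<integral>\<^sup>+ \<omega>. ennreal (real N * real n / \<kappa>\<^sup>2) * (\<Sum>p\<in>J. G p \<omega>) \<partial>M)"
        using pw by (intro nn_integral_mono) blast
      also have "\<dots> = ennreal (real N * real n / \<kappa>\<^sup>2) * (\<integral>\<^sup>+\<omega>. (\<Sum>p\<in>J. G p \<omega>) \<partial>M)"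
        using Gm by (intro nn_integral_cmult) (simp add: J_def)
      also have "\<dots> \<le> ennreal (real N * real n / \<kappa>\<^sup>2) * ennreal (real N * real n * B)"
        by (intro mult_left_mono ES) simp
      also have "\<dots> = ennreal ((real N * real n) ^ 2 * B / \<kappa>\<^sup>2)"
        using kp Bp by (simp add: ennreal_mult[symmetric] power2_eq_square mult_ac)
      also have "(real N * real n) ^ 2 * B / \<kappa>\<^sup>2 \<le> C * (real N)\<^sup>2 * R ^ 4"
      proof -
        have "(real N * real n) ^ 2 \<le> (real N * ((c0 + 1) * R\<^sup>2)) ^ 2"
          using nle by (intro power_mono mult_left_mono) auto
        then have "(real N * real n) ^ 2 * B / \<kappa>\<^sup>2 \<le> (real N * ((c0 + 1) * R\<^sup>2)) ^ 2 * B / \<kappa>\<^sup>2"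
          using kp Bp by (intro divide_right_mono mult_right_mono) auto
        also have "\<dots> = (B * (c0 + 1)\<^sup>2 / \<kappa>\<^sup>2) * (real N)\<^sup>2 * R ^ 4"
          by (simp add: field_simps power_mult_distrib power2_eq_square power4_eq_xxxx)
        also have "\<dots> \<le> C * (real N)\<^sup>2 * R ^ 4" using C2 by (intro mult_right_mono) auto
        finally show ?thesis .
      qed
      finally show ?thesis by (simp add: ennreal_leI)
    qed
  qed
qed

end
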